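(* Let $p$ be a prime, let $j\not\equiv 0,1 \pmod p$, and let $m\geq 2$ be an integer dividing $p-1$. Suppose $a,b,c\in\mathrm{GF}(p)$ satisfy \[ (1-j)a^m+jb^m\equiv c^m \pmod p, \] where $a^m,b^m,c^m$ are non-zero and pairwise distinct modulo $p$. Let $\alpha\not\equiv 0$ and $\gamma$ be constants modulo $p$. Form a new first row from the first row of $B_{p,j}$ (whose entry in column $i$ is $ij \bmod p$) as follows: every symbol of the form $\alpha\beta^m+\gamma$ with $\beta\not\equiv 0$ (i.e. every symbol $s$ such that $(s-\gamma)/\alpha$ is a non-zero $m$th power mod $p$) is replaced by the symbol $\alpha(b/c)^m\beta^m+\gamma$; all other symbols are left unchanged. Then this new first row generates a diagonally cyclic latin square of order $p$.
   Context: Rows, columns and symbols of squares of order $n$ are indexed by $\{0,1,\dots,n-1\}$ and computed modulo $n$. A latin square with operation $\circ$ (symbol $i\circ j$ in cell $(i,j)$) of odd order $n$ is diagonally cyclic if $i\circ j=k$ implies $(i+1)\circ(j+1)=k+1$ for all cells. A first row $(r_0,\dots,r_{n-1})$ "generates" the $n\times n$ array whose cell $(i,k)$ contains $r_{k-i}+i \pmod n$; it generates a diagonally cyclic latin square precisely when this array is a latin square. For $j$ coprime to odd $n$ with $j\neq 1$, $B_{n,j}$ is the diagonally cyclic latin square generated by the first row with $0\circ i = ij \pmod n$. *)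

theory Defs
  imports "HOL-Number_Theory.Number_Theory"
begin

definition generated_array :: "nat \<Rightarrow> (nat \<Rightarrow> int) \<Rightarrow> nat \<Rightarrow> nat \<Rightarrow> int" where
  "generated_array n r i k = (r ((k + n - i) mod n) + int i) mod int n"

definition latin_square :: "nat \<Rightarrow> (nat \<Rightarrow> nat \<Rightarrow> int) \<Rightarrow> bool" where
  "latin_square n L \<longleftrightarrow>
     (\<forall>i<n. bij_betw (\<lambda>k. L i k) {..<n} {0..<int n}) \<and>
     (\<forall>k<n. bij_betw (\<lambda>i. L i k) {..<n} {0..<int n})"

definition generates_dcls :: "nat \<Rightarrow> (nat \<Rightarrow> int) \<Rightarrow> bool" where
  "generates_dcls n r \<longleftrightarrow> latin_square n (generated_array n r)"

definition B_first_row :: "nat \<Rightarrow> int \<Rightarrow> nat \<Rightarrow> int" where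
  "B_first_row n j i = (int i * j) mod int n"

end

theory Submission
  imports Defs
begin

lemma nat_eq_of_dvd:
  assumes "int p dvd (int i - int k)" "i < p" "k < p" shows "i = k"
proof -
  have "[int i = int k] (mod int p)" using assms(1) by (simp add: cong_iff_dvd_diff)
  hence "[i = k] (mod p)" by (simp add: cong_int_iff)
  thus ?thesis using assms cong_less_modulus_unique_nat by blast
qed

lemma bij_of_inj:
  fixes f :: "nat \<Rightarrow> int"
  assumes "inj_on f {..<n}" "\<forall>k<n. f k \<in> {0..<int n}"
  shows "bij_betw f {..<n} {0..<int n}"
proof -
  have sub: "f ` {..<n} \<subseteq> {0..<int n}" using assms(2) by auto
  have "card (f ` {..<n}) = card {0..<int n}" using card_image[OF assms(1)] by simp
  hence "f ` {..<n} = {0..<int n}" using sub by (simp add: card_subset_eq)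
  thus ?thesis using assms(1) by (simp add: bij_betw_def)
qed

lemma shift_eq:
  fixes n i k :: nat
  assumes "i < n" "k < n"
  shows "int ((k + n - i) mod n) mod int n = (int k - int i) mod int n"
proof -
  have "int ((k + n - i) mod n) = int (k + n - i) mod int n" by (simp add: zmod_int)
  also have "int (k + n - i) = int k - int i + int n" using assms by simp
  finally show ?thesis by simp
qed

lemma dcls_crit:
  fixes r :: "nat \<Rightarrow> int"
  assumes n: "n > 0"
    and range: "\<forall>i<n. r i \<in> {0..<int n}"
    and inj1: "\<forall>t1<n. \<forall>t2<n. int n dvd (r t1 - r t2) \<longrightarrow> t1 = t2"
    and inj2: "\<forall>t1<n. \<forall>t2<n. int n dvd ((r t1 - int t1) - (r t2 - int t2)) \<longrightarrow> t1 = t2"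
  shows "generates_dcls n r"
  unfolding generates_dcls_def latin_square_def
proof (intro conjI allI impI)
  have rng: "\<forall>k<n. generated_array n r i k \<in> {0..<int n}" for i
    using n by (simp add: generated_array_def)
  fix i assume i: "i < n"
  show "bij_betw (generated_array n r i) {..<n} {0..<int n}"
  proof (rule bij_of_inj)
    show "\<forall>k<n. generated_array n r i k \<in> {0..<int n}" using rng by blast
    show "inj_on (generated_array n r i) {..<n}"
    proof (rule inj_onI)
      fix k1 k2 assume k1: "k1 \<in> {..<n}" and k2: "k2 \<in> {..<n}"
        and eq: "generated_array n r i k1 = generated_array n r i k2"
      define t1 where "t1 = (k1 + n - i) mod n"
      define t2 where "t2 = (k2 + n - i) mod n"
      have t: "t1 < n" "t2 < n" using n by (auto simp: t1_def t2_def)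
      have "[r t1 + int i = r t2 + int i] (mod int n)" using eq
        by (simp add: generated_array_def t1_def t2_def cong_def)
      hence "int n dvd (r t1 - r t2)" by (simp add: cong_iff_dvd_diff)
      hence "t1 = t2" using inj1 t by blast
      hence "int t1 mod int n = int t2 mod int n" by simp
      hence "(int k1 - int i) mod int n = (int k2 - int i) mod int n"
        using shift_eq[OF i] k1 k2 by (simp add: t1_def t2_def)
      hence "int n dvd (int k1 - int k2)"
        by (metis cong_def cong_iff_dvd_diff diff_diff_eq2 diff_right_commute)
      thus "k1 = k2" using nat_eq_of_dvd k1 k2 by auto
    qed
  qed
next
  have rng: "\<forall>i<n. generated_array n r i k \<in> {0..<int n}" for k
    using n by (simp add: generated_array_def)
  fix k assume k: "k < n"
  show "bij_betw (\<lambda>i. generated_array n r i k) {..<n} {0..<int n}"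
  proof (rule bij_of_inj)
    show "\<forall>i<n. generated_array n r i k \<in> {0..<int n}" using rng by blast
    show "inj_on (\<lambda>i. generated_array n r i k) {..<n}"
    proof (rule inj_onI)
      fix i1 i2 assume i1: "i1 \<in> {..<n}" and i2: "i2 \<in> {..<n}"
        and eq: "generated_array n r i1 k = generated_array n r i2 k"
      define t1 where "t1 = (k + n - i1) mod n"
      define t2 where "t2 = (k + n - i2) mod n"
      have t: "t1 < n" "t2 < n" using n by (auto simp: t1_def t2_def)
      have c1: "int n dvd (int t1 - (int k - int i1))"
        using shift_eq[of i1 n k] i1 k unfolding t1_def
        by (metis lessThan_iff mod_eq_dvd_iff)
      have c2: "int n dvd (int t2 - (int k - int i2))"
        using shift_eq[of i2 n k] i2 k unfolding t2_def
        by (metis lessThan_iff mod_eq_dvd_iff)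
      have "[r t1 + int i1 = r t2 + int i2] (mod int n)" using eq
        by (simp add: generated_array_def t1_def t2_def cong_def)
      hence d: "int n dvd ((r t1 + int i1) - (r t2 + int i2))" by (simp add: cong_iff_dvd_diff)
      have "(r t1 - int t1) - (r t2 - int t2) = ((r t1 + int i1) - (r t2 + int i2)) - (int t1 - (int k - int i1)) + (int t2 - (int k - int i2))"
        by simp
      hence "int n dvd ((r t1 - int t1) - (r t2 - int t2))" using d c1 c2
        by (metis dvd_add dvd_diff)
      hence "t1 = t2" using inj2 t by blast
      hence e: "int i1 - int i2 = (int t1 - (int k - int i1)) - (int t2 - (int k - int i2))" by simp
      have "int n dvd (int i1 - int i2)" unfolding e using c1 c2 by (rule dvd_diff)
      thus "i1 = i2" using nat_eq_of_dvd i1 i2 by auto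
    qed
  qed
qed

lemma cancel_l:
  fixes P e u :: int
  assumes "prime P" "\<not> P dvd e" "P dvd e * u" shows "P dvd u"
  using assms prime_dvd_mult_iff by blast

lemma qintro:
  fixes P c X \<beta> x \<gamma> \<alpha> :: int
  assumes pr: "prime P" and nc: "\<not> P dvd c" and nX: "\<not> P dvd X" and nb: "\<not> P dvd \<beta>"
    and m: "m > 0"
    and d: "P dvd (c^m*(x - \<gamma>) - \<alpha>*X^m*\<beta>^m)"
  shows "\<exists>\<delta>. \<not> P dvd \<delta> \<and> P dvd (x - (\<alpha>*\<delta>^m + \<gamma>))"
proof -
  have "coprime c P" using prime_imp_coprime[OF pr nc] by (simp add: ac_simps)
  then obtain c' where cc: "[c * c' = 1] (mod P)" using cong_solve_coprime_int by blast
  have nc': "\<not> P dvd c'"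
  proof
    assume "P dvd c'"
    hence "P dvd c * c'" by simp
    hence "P dvd 1" using cc by (metis cong_dvd_iff)
    thus False using pr not_prime_unit by blast
  qed
  have "[(c*c')^m = 1^m] (mod P)" using cc by (rule cong_pow)
  hence e: "P dvd ((c*c')^m - 1)" by (simp add: cong_iff_dvd_diff)
  define \<delta> where "\<delta> = X*\<beta>*c'"
  have nd: "\<not> P dvd \<delta>" unfolding \<delta>_def using pr nX nb nc' prime_dvd_mult_iff by metis
  have eq: "c^m*(x - (\<alpha>*\<delta>^m + \<gamma>)) = (c^m*(x - \<gamma>) - \<alpha>*X^m*\<beta>^m) - (\<alpha>*X^m*\<beta>^m) * ((c*c')^m - 1)"
    unfolding \<delta>_def by (simp add: power_mult_distrib algebra_simps)
  have "P dvd c^m*(x - (\<alpha>*\<delta>^m + \<gamma>))" unfolding eq using d e by (simp add: dvd_diff)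
  moreover have "\<not> P dvd c^m" using pr nc m prime_dvd_power_iff by blast
  ultimately have "P dvd (x - (\<alpha>*\<delta>^m + \<gamma>))" using cancel_l pr by blast
  thus ?thesis using nd by blast
qed

lemma lin4:
  fixes P :: int
  assumes "P dvd x1" "P dvd x2" "P dvd x3" "P dvd x4" "T = u1*x1 + u2*x2 + u3*x3 + u4*x4"
  shows "P dvd T"
  using assms by simp

lemma ident_mixed:
  fixes j C \<gamma> \<alpha> a \<beta> E :: int and r' :: "nat \<Rightarrow> int"
  shows "(j - 1) * (C*(int k * j - \<gamma>) - \<alpha>*a^m*\<beta>^m) =
   - C*j * ((r' k - int k) - (j - 1) * int k) + - C*j * ((r' i - int i) - (r' k - int k))
   + 1 * (C*j*(r' i - int i) - (\<alpha>*\<beta>^m*E + (j-1)*C*\<gamma>)) + (\<alpha>*\<beta>^m) * (E - (j - 1) * a^m)"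
  by (simp add: algebra_simps)

lemma Bcong: "[B_first_row p j i = y] (mod int p) \<longleftrightarrow> int p dvd (int i * j - y)"
  unfolding B_first_row_def cong_iff_dvd_diff[symmetric] cong_def by simp

theorem theorem3:
  fixes p m :: nat and j a b c \<alpha> \<gamma> :: int and r' :: "nat \<Rightarrow> int"
  assumes "prime p"
    and "\<not> [j = 0] (mod int p)" and "\<not> [j = 1] (mod int p)"
    and "m \<ge> 2" and "m dvd p - 1"
    and "[(1 - j) * a ^ m + j * b ^ m = c ^ m] (mod int p)"
    and "\<not> [a ^ m = 0] (mod int p)" and "\<not> [b ^ m = 0] (mod int p)"
    and "\<not> [c ^ m = 0] (mod int p)"
    and "\<not> [a ^ m = b ^ m] (mod int p)" and "\<not> [a ^ m = c ^ m] (mod int p)"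
    and "\<not> [b ^ m = c ^ m] (mod int p)"
    and "\<not> [\<alpha> = 0] (mod int p)"
    and range: "\<forall>i<p. r' i \<in> {0..<int p}"
    and replaced: "\<forall>i<p. \<forall>\<beta>. \<not> [\<beta> = 0] (mod int p) \<and>
                     [B_first_row p j i = \<alpha> * \<beta> ^ m + \<gamma>] (mod int p) \<longrightarrow>
                     [c ^ m * r' i = \<alpha> * b ^ m * \<beta> ^ m + c ^ m * \<gamma>] (mod int p)"
    and unchanged: "\<forall>i<p. \<not> (\<exists>\<beta>. \<not> [\<beta> = 0] (mod int p) \<and>
                     [B_first_row p j i = \<alpha> * \<beta> ^ m + \<gamma>] (mod int p)) \<longrightarrow>
                     r' i = B_first_row p j i"
  shows "generates_dcls p r'"
proof -
  define P where "P = int p"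
  have pr: "prime P" using assms(1) by (simp add: P_def)
  have m0: "m > 0" using assms(4) by simp
  define A where "A = a^m"
  define Bm where "Bm = b^m"
  define C where "C = c^m"
  have nj: "\<not> P dvd j" using assms(2) by (simp add: P_def cong_0_iff)
  have nj1: "\<not> P dvd (j - 1)" using assms(3) by (simp add: P_def cong_iff_dvd_diff)
  have nA: "\<not> P dvd A" using assms(7) by (simp add: P_def A_def cong_0_iff)
  have nB: "\<not> P dvd Bm" using assms(8) by (simp add: P_def Bm_def cong_0_iff)
  have nC: "\<not> P dvd C" using assms(9) by (simp add: P_def C_def cong_0_iff)
  have na: "\<not> P dvd a" using nA m0 pr prime_dvd_power_iff A_def by blast
  have nb: "\<not> P dvd b" using nB m0 pr prime_dvd_power_iff Bm_def by blast
  have nc: "\<not> P dvd c" using nC m0 pr prime_dvd_power_iff C_def by blast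
  have nal: "\<not> P dvd \<alpha>" using assms(13) by (simp add: P_def cong_0_iff)
  have rel: "P dvd ((1 - j) * A + j * Bm - C)" using assms(6)
    by (simp add: P_def A_def Bm_def C_def cong_iff_dvd_diff)
  define E where "E = j * Bm - C"
  have EA: "P dvd (E - (j - 1) * A)"
  proof -
    have "E - (j - 1) * A = (1 - j) * A + j * Bm - C" by (simp add: E_def algebra_simps)
    thus ?thesis using rel by simp
  qed
  have nE: "\<not> P dvd E"
  proof
    assume "P dvd E"
    hence "P dvd (E - (E - (j - 1) * A))" using EA by (rule dvd_diff)
    hence "P dvd (j - 1) * A" by simp
    thus False using pr nj1 nA prime_dvd_mult_iff by blast
  qed
  define s where "s i = int i * j" for i :: nat
  define Q where "Q x = (\<exists>\<beta>. \<not> P dvd \<beta> \<and> P dvd (x - (\<alpha>*\<beta>^m + \<gamma>)))" for x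
  have Qc: "\<exists>\<beta>. \<not> P dvd \<beta> \<and> P dvd (s i - (\<alpha>*\<beta>^m + \<gamma>)) \<and> P dvd (C * r' i - (\<alpha>*Bm*\<beta>^m + C*\<gamma>))"
    if ti: "i < p" and tq: "Q (s i)" for i
  proof -
    obtain \<beta> where b1: "\<not> P dvd \<beta>" "P dvd (s i - (\<alpha>*\<beta>^m + \<gamma>))" using tq Q_def by blast
    have "[c ^ m * r' i = \<alpha> * b ^ m * \<beta> ^ m + c ^ m * \<gamma>] (mod int p)"
    proof -
      have h1: "\<not> [\<beta> = 0] (mod int p)" using b1(1) by (simp add: cong_0_iff P_def)
      have h2: "[B_first_row p j i = \<alpha> * \<beta> ^ m + \<gamma>] (mod int p)" using b1(2) by (simp add: Bcong P_def s_def)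
      show ?thesis using replaced ti h1 h2 by blast
    qed
    hence "P dvd (C * r' i - (\<alpha>*Bm*\<beta>^m + C*\<gamma>))"
      by (simp add: P_def C_def Bm_def cong_iff_dvd_diff)
    thus ?thesis using b1 by blast
  qed
  have Nc: "P dvd (r' i - s i)" if "i < p" "\<not> Q (s i)" for i
  proof -
    have "\<not> (\<exists>\<beta>. \<not> [\<beta> = 0] (mod int p) \<and>
                     [B_first_row p j i = \<alpha> * \<beta> ^ m + \<gamma>] (mod int p))"
      using that(2) unfolding Bcong cong_0_iff P_def s_def Q_def by simp
    hence "r' i = B_first_row p j i" using unchanged that(1) by blast
    hence r: "r' i = s i mod P" by (simp add: B_first_row_def s_def P_def)
    have "(s i mod P) mod P = s i mod P" by simp
    hence "P dvd (s i mod P - s i)" by (simp only: mod_eq_dvd_iff)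
    thus ?thesis using r by simp
  qed
  have seq: "i = k" if "i < p" "k < p" "P dvd (s i - s k)" for i k
  proof -
    have "s i - s k = j * (int i - int k)" by (simp add: s_def algebra_simps)
    hence "P dvd (j * (int i - int k))" using that(3) by simp
    hence "P dvd (int i - int k)" using cancel_l[OF pr nj] by blast
    thus ?thesis using nat_eq_of_dvd that P_def by blast
  qed
  have qint: "Q x" if "\<not> P dvd X" "\<not> P dvd \<beta>" "P dvd (C*(x - \<gamma>) - \<alpha>*X^m*\<beta>^m)" for x X \<beta>
    using qintro[OF pr nc that(1) that(2) m0] that(3) unfolding Q_def C_def by blast
  have p0: "p > 0" using assms(1) prime_gt_0_nat by blast
  show ?thesis
  proof (rule dcls_crit[OF p0 range])

    have Nd: "P dvd ((r' i - int i) - (j - 1) * int i)" if "i < p" "\<not> Q (s i)" for i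
    proof -
      have e: "(r' i - int i) - (j - 1) * int i = r' i - s i" by (simp add: s_def algebra_simps)
      show ?thesis unfolding e using Nc[OF that] .
    qed
    have Qd: "\<exists>\<beta>. \<not> P dvd \<beta> \<and> P dvd (s i - (\<alpha>*\<beta>^m + \<gamma>)) \<and> P dvd (C * r' i - (\<alpha>*Bm*\<beta>^m + C*\<gamma>))
          \<and> P dvd (C*j*(r' i - int i) - (\<alpha>*\<beta>^m*E + (j-1)*C*\<gamma>))"
      if ti: "i < p" and tq: "Q (s i)" for i
    proof -
      obtain \<beta> where b: "\<not> P dvd \<beta>" "P dvd (s i - (\<alpha>*\<beta>^m + \<gamma>))" "P dvd (C * r' i - (\<alpha>*Bm*\<beta>^m + C*\<gamma>))"
        using Qc[OF ti tq] by blast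
      have "P dvd (C*j*(r' i - int i) - (\<alpha>*\<beta>^m*E + (j-1)*C*\<gamma>))"
        by (rule lin4[OF b(3) b(2) dvd_0_right dvd_0_right, of _ j "-C" 0 0])
           (simp add: s_def E_def algebra_simps)
      thus ?thesis using b by blast
    qed
    show "\<forall>t1<p. \<forall>t2<p. int p dvd (r' t1 - r' t2) \<longrightarrow> t1 = t2"
    proof (intro allI impI)
      have mixed: False if "i < p" "k < p" "Q (s i)" "\<not> Q (s k)" "P dvd (r' i - r' k)" for i k
      proof -
        note th = that
        obtain \<beta> where b: "\<not> P dvd \<beta>" "P dvd (C * r' i - (\<alpha>*Bm*\<beta>^m + C*\<gamma>))"
          using Qc[OF th(1,3)] by blast
        have "P dvd (C*(s k - \<gamma>) - \<alpha>*b^m*\<beta>^m)"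
          by (rule lin4[OF Nc[OF th(2,4)] th(5) b(2) dvd_0_right, of _ "-C" "-C" 1 0])
             (simp add: Bm_def algebra_simps)
        hence "Q (s k)" using qint nb b(1) by blast
        thus False using th(4) by blast
      qed
      fix i k assume i: "i < p" and k: "k < p" and d0: "int p dvd (r' i - r' k)"
      have d: "P dvd (r' i - r' k)" using d0 P_def by simp
      show "i = k"
      proof (cases "Q (s i)"; cases "Q (s k)")
        assume qi: "Q (s i)" and qk: "Q (s k)"
        obtain \<beta>1 where b1: "\<not> P dvd \<beta>1" "P dvd (s i - (\<alpha>*\<beta>1^m + \<gamma>))" "P dvd (C * r' i - (\<alpha>*Bm*\<beta>1^m + C*\<gamma>))"
          using Qc[OF i qi] by blast
        obtain \<beta>2 where b2: "\<not> P dvd \<beta>2" "P dvd (s k - (\<alpha>*\<beta>2^m + \<gamma>))" "P dvd (C * r' k - (\<alpha>*Bm*\<beta>2^m + C*\<gamma>))"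
          using Qc[OF k qk] by blast
        have "P dvd ((\<alpha>*Bm) * (\<beta>1^m - \<beta>2^m))"
          by (rule lin4[OF d b1(3) b2(3) dvd_0_right, of _ C "-1" 1 0]) (simp add: algebra_simps)
        moreover have "\<not> P dvd (\<alpha>*Bm)" using pr nal nB prime_dvd_mult_iff by blast
        ultimately have bb: "P dvd (\<beta>1^m - \<beta>2^m)" using cancel_l pr by blast
        have "P dvd (s i - s k)"
          by (rule lin4[OF b1(2) b2(2) bb dvd_0_right, of _ 1 "-1" \<alpha> 0]) (simp add: algebra_simps)
        thus ?thesis using seq i k by blast
      next
        assume "Q (s i)" "\<not> Q (s k)" thus ?thesis using mixed i k d by blast
      next
        assume "\<not> Q (s i)" "Q (s k)"
        moreover have "P dvd (r' k - r' i)" using d by (metis dvd_minus_iff minus_diff_eq)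
        ultimately show ?thesis using mixed i k by blast
      next
        assume qi: "\<not> Q (s i)" and qk: "\<not> Q (s k)"
        have "P dvd (s i - s k)"
          by (rule lin4[OF d Nc[OF i qi] Nc[OF k qk] dvd_0_right, of _ 1 "-1" 1 0]) (simp add: algebra_simps)
        thus ?thesis using seq i k by blast
      qed
    qed
    show "\<forall>t1<p. \<forall>t2<p. int p dvd ((r' t1 - int t1) - (r' t2 - int t2)) \<longrightarrow> t1 = t2"
    proof (intro allI impI)
      have mixed: False if "i < p" "k < p" "Q (s i)" "\<not> Q (s k)"
          "P dvd ((r' i - int i) - (r' k - int k))" for i k
      proof -
        note th = that
        obtain \<beta> where b: "\<not> P dvd \<beta>" "P dvd (C*j*(r' i - int i) - (\<alpha>*\<beta>^m*E + (j-1)*C*\<gamma>))"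
          using Qd[OF th(1,3)] by blast
        have "P dvd ((j - 1) * (C*(s k - \<gamma>) - \<alpha>*a^m*\<beta>^m))"
          by (rule lin4[OF Nd[OF th(2,4)] th(5) b(2) EA, of _ "-C*j" "-C*j" 1 "\<alpha>*\<beta>^m"])
             (simp only: A_def s_def, rule ident_mixed)
        hence "P dvd (C*(s k - \<gamma>) - \<alpha>*a^m*\<beta>^m)" using cancel_l pr nj1 by blast
        hence "Q (s k)" using qint na b(1) by blast
        thus False using th(4) by blast
      qed
      fix i k assume i: "i < p" and k: "k < p" and d0: "int p dvd ((r' i - int i) - (r' k - int k))"
      have d: "P dvd ((r' i - int i) - (r' k - int k))" using d0 P_def by simp
      show "i = k"
      proof (cases "Q (s i)"; cases "Q (s k)")
        assume qi: "Q (s i)" and qk: "Q (s k)"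
        obtain \<beta>1 where b1: "\<not> P dvd \<beta>1" "P dvd (s i - (\<alpha>*\<beta>1^m + \<gamma>))"
             "P dvd (C*j*(r' i - int i) - (\<alpha>*\<beta>1^m*E + (j-1)*C*\<gamma>))"
          using Qd[OF i qi] by blast
        obtain \<beta>2 where b2: "\<not> P dvd \<beta>2" "P dvd (s k - (\<alpha>*\<beta>2^m + \<gamma>))"
             "P dvd (C*j*(r' k - int k) - (\<alpha>*\<beta>2^m*E + (j-1)*C*\<gamma>))"
          using Qd[OF k qk] by blast
        have "P dvd ((\<alpha>*E) * (\<beta>1^m - \<beta>2^m))"
          by (rule lin4[OF d b1(3) b2(3) dvd_0_right, of _ "C*j" "-1" 1 0]) (simp add: algebra_simps)
        moreover have "\<not> P dvd (\<alpha>*E)" using pr nal nE prime_dvd_mult_iff by blast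
        ultimately have bb: "P dvd (\<beta>1^m - \<beta>2^m)" using cancel_l pr by blast
        have "P dvd (s i - s k)"
          by (rule lin4[OF b1(2) b2(2) bb dvd_0_right, of _ 1 "-1" \<alpha> 0]) (simp add: algebra_simps)
        thus ?thesis using seq i k by blast
      next
        assume "Q (s i)" "\<not> Q (s k)" thus ?thesis using mixed i k d by blast
      next
        assume "\<not> Q (s i)" "Q (s k)"
        moreover have "P dvd ((r' k - int k) - (r' i - int i))" using d by (metis dvd_minus_iff minus_diff_eq)
        ultimately show ?thesis using mixed i k by blast
      next
        assume qi: "\<not> Q (s i)" and qk: "\<not> Q (s k)"
        have "P dvd ((j - 1) * (int i - int k))"
          by (rule lin4[OF d Nd[OF i qi] Nd[OF k qk] dvd_0_right, of _ 1 "-1" 1 0]) (simp add: algebra_simps)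
        hence "P dvd (int i - int k)" using cancel_l pr nj1 by blast
        thus ?thesis using nat_eq_of_dvd i k P_def by blast
      qed
    qed
  qed
qed

end
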